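(* Let $n\ge2$ and let $\chi_{n-1}$ be the irreducible character of the symmetric group $S_n$ of dimension $n-1$ such that the character of the standard $n$-dimensional permutation representation of $S_n$ equals $1+\chi_{n-1}$. Then for every $g\in S_n$, $$c(g)\le\frac1n\Big(1+\frac{\chi_{n-1}(g)}{(n-1)^2}\Big),$$ and $$c(S_n)\le\frac{1}{n-1}.$$
   Context: For a finite group $G$ and $g\in G$, $c(g)=|\{(x,y)\in G\times G:[x,y]=g\}|/|G|^2$, and $c(G)=c(1)$. *)

theory Defs
  imports Complex_Main "HOL-Algebra.Sym_Groups"
begin

definition commutator :: "('a, 'b) monoid_scheme \<Rightarrow> 'a \<Rightarrow> 'a \<Rightarrow> 'a" where
  "commutator G x y = inv\<^bsub>G\<^esub> x \<otimes>\<^bsub>G\<^esub> inv\<^bsub>G\<^esub> y \<otimes>\<^bsub>G\<^esub> x \<otimes>\<^bsub>G\<^esub> y"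

definition comm_prob :: "('a, 'b) monoid_scheme \<Rightarrow> 'a \<Rightarrow> real" where
  "comm_prob G g =
     real (card {(x, y). x \<in> carrier G \<and> y \<in> carrier G \<and> commutator G x y = g})
     / real (card (carrier G)) ^ 2"

text \<open>Character of the standard permutation representation of S_n on {1..n}:
  the trace of the permutation matrix, i.e. the number of fixed points.\<close>
definition perm_char :: "nat \<Rightarrow> (nat \<Rightarrow> nat) \<Rightarrow> real" where
  "perm_char n g = real (card {i \<in> {1..n}. g i = i})"

definition chi_std :: "nat \<Rightarrow> (nat \<Rightarrow> nat) \<Rightarrow> real" where
  "chi_std n g = perm_char n g - 1"

end

theory Submission
  imports Defs
begin

lemma perm_fix_transfer:
  assumes "u \<in> S" "v \<in> S"
  shows "card {p. p permutes S \<and> p u = v \<and> R p} = card {q. q permutes S - {u} \<and> R (transpose u v \<circ> q)}"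
proof -
  have eq: "{p. p permutes S \<and> p u = v \<and> R p} = (\<lambda>q. transpose u v \<circ> q) ` {q. q permutes S - {u} \<and> R (transpose u v \<circ> q)}"
  proof (intro subset_antisym subsetI)
    fix p assume p: "p \<in> {p. p permutes S \<and> p u = v \<and> R p}"
    define q where "q = transpose u v \<circ> p"
    have tt: "transpose u v \<circ> q = p" unfolding q_def by (simp add: fun_eq_iff)
    have "q permutes S" unfolding q_def using p assms by (simp add: permutes_compose permutes_swap_id)
    moreover have "q u = u" using p by (simp add: q_def)
    ultimately have "q permutes S - {u}" using permutes_superset[of q S "S - {u}"] by auto
    show "p \<in> (\<lambda>q. transpose u v \<circ> q) ` {q. q permutes S - {u} \<and> R (transpose u v \<circ> q)}"
    proof (rule image_eqI[of _ _ q])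
      show "p = transpose u v \<circ> q" using tt by simp
      show "q \<in> {q. q permutes S - {u} \<and> R (transpose u v \<circ> q)}" using tt p \<open>q permutes S - {u}\<close> by simp
    qed
  next
    fix p assume "p \<in> (\<lambda>q. transpose u v \<circ> q) ` {q. q permutes S - {u} \<and> R (transpose u v \<circ> q)}"
    then obtain q where q: "q permutes S - {u}" "R (transpose u v \<circ> q)" and pq: "p = transpose u v \<circ> q" by auto
    have "q permutes S" using q(1) by (rule permutes_subset) auto
    hence "p permutes S" unfolding pq using assms by (simp add: permutes_compose permutes_swap_id)
    moreover have "q u = u" using q(1) by (simp add: permutes_not_in)
    ultimately show "p \<in> {p. p permutes S \<and> p u = v \<and> R p}" using pq q by auto
  qed
  have "inj (\<lambda>q. transpose u v \<circ> q)"
  proof (rule injI)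
    fix a b assume "transpose u v \<circ> a = transpose u v \<circ> b"
    then have "transpose u v \<circ> (transpose u v \<circ> a) = transpose u v \<circ> (transpose u v \<circ> b)" by simp
    then show "a = b" by (simp add: comp_assoc[symmetric])
  qed
  then show ?thesis unfolding eq by (rule card_image[OF inj_on_subset[OF _ subset_UNIV]])
qed

lemma count1:
  assumes "finite S" "u \<in> S" "v \<in> S"
  shows "card {p. p permutes S \<and> p u = v} = fact (card S - 1)"
proof -
  have "card {p. p permutes S \<and> p u = v} = card {p. p permutes S \<and> p u = v \<and> True}" by simp
  also have "\<dots> = card {q. q permutes S - {u}}" using perm_fix_transfer[OF assms(2,3), of "\<lambda>_. True"] by simp
  also have "\<dots> = fact (card S - 1)" using assms by (intro card_permutations) auto
  finally show ?thesis .
qed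

lemma count2:
  assumes "finite S" "u1 \<in> S" "v1 \<in> S" "u2 \<in> S" "v2 \<in> S" "u1 \<noteq> u2" "v1 \<noteq> v2"
  shows "card {p. p permutes S \<and> p u1 = v1 \<and> p u2 = v2} = fact (card S - 2)"
proof -
  define w where "w = transpose u1 v1 v2"
  have w: "w \<in> S - {u1}" using assms unfolding w_def by (auto simp: transpose_def)
  have "card {p. p permutes S \<and> p u1 = v1 \<and> p u2 = v2} = card {q. q permutes S - {u1} \<and> (transpose u1 v1 \<circ> q) u2 = v2}"
    using perm_fix_transfer[OF assms(2,3), of "\<lambda>p. p u2 = v2"] by simp
  also have "{q. q permutes S - {u1} \<and> (transpose u1 v1 \<circ> q) u2 = v2} = {q. q permutes S - {u1} \<and> q u2 = w}"
    unfolding w_def by (intro Collect_cong conj_cong refl) (metis comp_apply transpose_involutory)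
  also have "card \<dots> = fact (card (S - {u1}) - 1)" using assms w by (intro count1) auto
  also have "card (S - {u1}) - 1 = card S - 2" using assms by simp
  finally show ?thesis .
qed

lemma card_fiber_sum:
  assumes "finite X" "finite A"
  shows "card {x\<in>X. f x \<in> A} = (\<Sum>a\<in>A. card {x\<in>X. f x = a})"
proof -
  have "{x\<in>X. f x \<in> A} = (\<Union>a\<in>A. {x\<in>X. f x = a})" by auto
  then show ?thesis using assms by (simp only:) (subst card_UN_disjoint, auto)
qed

lemma card_swap_sum:
  assumes "finite X" "finite Y"
  shows "(\<Sum>x\<in>X. card {y\<in>Y. Q x y}) = (\<Sum>y\<in>Y. card {x\<in>X. Q x y})"
proof -
  have "(\<Sum>x\<in>X. card {y\<in>Y. Q x y}) = (\<Sum>x\<in>X. \<Sum>y\<in>Y. if Q x y then 1 else 0)"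
    using assms by (simp add: sum.If_cases Int_def)
  also have "\<dots> = (\<Sum>y\<in>Y. \<Sum>x\<in>X. if Q x y then 1 else 0)" by (rule sum.swap)
  also have "\<dots> = (\<Sum>y\<in>Y. card {x\<in>X. Q x y})"
    using assms by (simp add: sum.If_cases Int_def)
  finally show ?thesis .
qed


lemma card_pairs_sum:
  assumes "finite G"
  shows "card {(x,y). x \<in> G \<and> y \<in> G \<and> Q x y} = (\<Sum>x\<in>G. card {y\<in>G. Q x y})"
proof -
  have "{(x,y). x \<in> G \<and> y \<in> G \<and> Q x y} = Sigma G (\<lambda>x. {y\<in>G. Q x y})" by auto
  then show ?thesis using assms by simp
qed

lemma cnt_fixed:
  assumes S: "finite S" and iS: "i \<in> S" and x: "x permutes S" and xi: "x i = i"
  shows "card {y\<in>{p. p permutes S}. x (y i) = y (x i)} = card {j\<in>S. x j = j} * fact (card S - 1)"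
proof -
  have fin: "finite {p. p permutes S}" using S by (rule finite_permutations)
  have "{y\<in>{p. p permutes S}. x (y i) = y (x i)} = {y\<in>{p. p permutes S}. y i \<in> {j\<in>S. x j = j}}"
    using xi iS by (auto simp: permutes_in_image)
  also have "card \<dots> = (\<Sum>a\<in>{j\<in>S. x j = j}. card {y\<in>{p. p permutes S}. y i = a})"
    using fin S by (intro card_fiber_sum) auto
  also have "\<dots> = (\<Sum>a\<in>{j\<in>S. x j = j}. fact (card S - 1))"
    using count1[OF S iS] by (intro sum.cong) auto
  finally show ?thesis by simp
qed

lemma cnt_moved:
  assumes S: "finite S" and iS: "i \<in> S" and x: "x permutes S" and xi: "x i \<noteq> i"
  shows "card {y\<in>{p. p permutes S}. x (y i) = y (x i)} = card {j\<in>S. x j \<noteq> j} * fact (card S - 2)"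
proof -
  have fin: "finite {p. p permutes S}" using S by (rule finite_permutations)
  define B where "B = (\<lambda>j. (j, x j)) ` {j\<in>S. x j \<noteq> j}"
  have xiS: "x i \<in> S" using x iS by (simp add: permutes_in_image)
  have "{y\<in>{p. p permutes S}. x (y i) = y (x i)} = {y\<in>{p. p permutes S}. (y i, y (x i)) \<in> B}"
  proof (intro Collect_cong conj_cong refl iffI)
    fix y assume y: "y \<in> {p. p permutes S}" and e: "x (y i) = y (x i)"
    have yiS: "y i \<in> S" using y iS by (simp add: permutes_in_image)
    have "x (y i) \<noteq> y i"
    proof
      assume "x (y i) = y i"
      then have "y (x i) = y i" using e by simp
      then have "x i = i" using y by (simp add: permutes_inj[THEN injD])
      then show False using xi by simp
    qed
    then show "(y i, y (x i)) \<in> B" unfolding B_def using e yiS by (auto intro!: image_eqI[of _ _ "y i"])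
  next
    fix y assume "(y i, y (x i)) \<in> B"
    then show "x (y i) = y (x i)" unfolding B_def by auto
  qed
  also have "card \<dots> = (\<Sum>b\<in>B. card {y\<in>{p. p permutes S}. (y i, y (x i)) = b})"
    using fin S unfolding B_def by (intro card_fiber_sum) auto
  also have "\<dots> = (\<Sum>b\<in>B. fact (card S - 2))"
  proof (intro sum.cong refl)
    fix b assume "b \<in> B"
    then obtain j where j: "j \<in> S" "x j \<noteq> j" and b: "b = (j, x j)" unfolding B_def by auto
    have xjS: "x j \<in> S" using x j by (simp add: permutes_in_image)
    have "{y\<in>{p. p permutes S}. (y i, y (x i)) = b} = {p. p permutes S \<and> p i = j \<and> p (x i) = x j}"
      using b by auto
    also have "card \<dots> = fact (card S - 2)" using count2[OF S iS j(1) xiS xjS] xi j by auto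
    finally show "card {y\<in>{p. p permutes S}. (y i, y (x i)) = b} = fact (card S - 2)" .
  qed
  finally have "card {y\<in>{p. p permutes S}. x (y i) = y (x i)} = card B * fact (card S - 2)" by simp
  moreover have "card B = card {j\<in>S. x j \<noteq> j}" unfolding B_def by (rule card_image) (auto intro: inj_onI)
  ultimately show ?thesis by simp
qed


lemma card_split:
  assumes "finite S"
  shows "card {j\<in>S. P j} + card {j\<in>S. \<not> P j} = card S"
proof -
  have "S = {j\<in>S. P j} \<union> {j\<in>S. \<not> P j}" by auto
  then have "card S = card ({j\<in>S. P j} \<union> {j\<in>S. \<not> P j})" by simp
  also have "\<dots> = card {j\<in>S. P j} + card {j\<in>S. \<not> P j}" using assms by (intro card_Un_disjoint) auto
  finally show ?thesis by simp
qed

lemma sumA: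
  assumes S: "finite S" and iS: "i \<in> S"
  shows "(\<Sum>x\<in>{x\<in>{p. p permutes S}. x i = i}. card {j\<in>S. x j = j}) = fact (card S - 1) + (card S - 1) * fact (card S - 2)"
proof -
  have fin: "finite {x\<in>{p. p permutes S}. x i = i}" using finite_permutations[OF S] by simp
  have "(\<Sum>x\<in>{x\<in>{p. p permutes S}. x i = i}. card {j\<in>S. x j = j}) = (\<Sum>j\<in>S. card {x\<in>{x\<in>{p. p permutes S}. x i = i}. x j = j})"
    using fin S by (rule card_swap_sum)
  also have "\<dots> = (\<Sum>j\<in>S. if j = i then fact (card S - 1) else fact (card S - 2))"
  proof (intro sum.cong refl)
    fix j assume j: "j \<in> S"
    show "card {x\<in>{x\<in>{p. p permutes S}. x i = i}. x j = j} = (if j = i then fact (card S - 1) else fact (card S - 2))"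
    proof (cases "j = i")
      case True
      then show ?thesis using count1[OF S iS iS] by simp
    next
      case False
      have "{x\<in>{x\<in>{p. p permutes S}. x i = i}. x j = j} = {p. p permutes S \<and> p i = i \<and> p j = j}" by auto
      then show ?thesis using count2[OF S iS iS j j] False by simp
    qed
  qed
  also have "\<dots> = fact (card S - 1) + (\<Sum>j\<in>S - {i}. if j = i then fact (card S - 1) else fact (card S - 2))"
    using S iS by (simp add: sum.remove)
  also have "(\<Sum>j\<in>S - {i}. if j = i then fact (card S - 1) else fact (card S - 2)) = (\<Sum>j\<in>S - {i}. fact (card S - 2))"
    by (intro sum.cong) auto
  also have "\<dots> = (card S - 1) * fact (card S - 2)" using S iS by simp
  finally show ?thesis .
qed

lemma sumB:
  assumes S: "finite S"
  shows "(\<Sum>x\<in>{p. p permutes S}. card {j\<in>S. x j = j}) = card S * fact (card S - 1)"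
proof -
  have "(\<Sum>x\<in>{p. p permutes S}. card {j\<in>S. x j = j}) = (\<Sum>j\<in>S. card {x\<in>{p. p permutes S}. x j = j})"
    using finite_permutations[OF S] S by (rule card_swap_sum)
  also have "\<dots> = (\<Sum>j\<in>S. fact (card S - 1))"
    using count1[OF S] by (intro sum.cong) auto
  finally show ?thesis by simp
qed

lemma P_count:
  assumes S: "finite S" and iS: "i \<in> S" and n2: "card S \<ge> 2"
  shows "(real (card S) - 1) * real (card {(x,y). x \<in> {p. p permutes S} \<and> y \<in> {p. p permutes S} \<and> x (y i) = y (x i)})
         = (fact (card S))^2"
proof -
  define G where "G = {p. p permutes S}"
  define n where "n = card S"
  have finG: "finite G" unfolding G_def using S by (rule finite_permutations)
  define F where "F x = real (card {j\<in>S. x j = j})" for x :: "'a \<Rightarrow> 'a"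
  define f1 where "f1 = (fact (n - 1) :: real)"
  define f2 where "f2 = (fact (n - 2) :: real)"
  obtain m where nm: "n = m + 2" using n2 unfolding n_def by (metis add.commute le_Suc_ex)
  have f12: "f1 = (real n - 1) * f2" unfolding f1_def f2_def nm by (simp add: algebra_simps)
  have fN: "(fact n :: real) = real n * f1" unfolding f1_def nm by (simp add: algebra_simps)
  have cntx: "real (card {y\<in>G. x (y i) = y (x i)}) = (if x i = i then F x * f1 else (real n - F x) * f2)" if x: "x \<in> G" for x
  proof (cases "x i = i")
    case True
    then show ?thesis using cnt_fixed[OF S iS, of x] True x unfolding G_def F_def f1_def n_def by simp
  next
    case False
    have "card {j\<in>S. x j = j} + card {j\<in>S. x j \<noteq> j} = n" unfolding n_def using S by (rule card_split)
    then have "real (card {j\<in>S. x j \<noteq> j}) = real n - F x" unfolding F_def by linarith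
    then show ?thesis using cnt_moved[OF S iS, of x] x False unfolding G_def f2_def n_def by simp
  qed
  define a where "a x = (if x i = i then F x else 0)" for x
  define b where "b x = (if x i = i then 0 else (1::real))" for x
  have "real (card {(x,y). x \<in> G \<and> y \<in> G \<and> x (y i) = y (x i)}) = (\<Sum>x\<in>G. real (card {y\<in>G. x (y i) = y (x i)}))"
    using card_pairs_sum[OF finG] by simp
  also have "\<dots> = (\<Sum>x\<in>G. f1 * a x + f2 * (real n * b x - (F x - a x)))"
    using cntx by (intro sum.cong) (auto simp: a_def b_def algebra_simps)
  also have "\<dots> = f1 * (\<Sum>x\<in>G. a x) + f2 * (real n * (\<Sum>x\<in>G. b x) - ((\<Sum>x\<in>G. F x) - (\<Sum>x\<in>G. a x)))"
  proof -
    have e1: "(\<Sum>x\<in>G. real n * b x - (F x - a x)) = real n * (\<Sum>x\<in>G. b x) - ((\<Sum>x\<in>G. F x) - (\<Sum>x\<in>G. a x))"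
      by (simp only: sum_subtractf sum_distrib_left)
    have "(\<Sum>x\<in>G. f1 * a x + f2 * (real n * b x - (F x - a x))) = f1 * (\<Sum>x\<in>G. a x) + f2 * (\<Sum>x\<in>G. real n * b x - (F x - a x))"
      by (simp only: sum.distrib sum_distrib_left)
    then show ?thesis by (simp only: e1)
  qed
  finally have P1: "real (card {(x,y). x \<in> G \<and> y \<in> G \<and> x (y i) = y (x i)}) = f1 * (\<Sum>x\<in>G. a x) + f2 * (real n * (\<Sum>x\<in>G. b x) - ((\<Sum>x\<in>G. F x) - (\<Sum>x\<in>G. a x)))" .
  have sa: "(\<Sum>x\<in>G. a x) = 2 * f1"
  proof -
    have "(\<Sum>x\<in>G. a x) = (\<Sum>x\<in>{x\<in>G. x i = i}. F x)" unfolding a_def using finG by (simp add: sum.inter_filter)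
    also have "\<dots> = real (\<Sum>x\<in>{x\<in>G. x i = i}. card {j\<in>S. x j = j})" unfolding F_def by simp
    also have "\<dots> = f1 + (real n - 1) * f2" using sumA[OF S iS] n2 unfolding G_def f1_def f2_def n_def by (simp add: of_nat_diff)
    finally show ?thesis using f12 by simp
  qed
  have sF: "(\<Sum>x\<in>G. F x) = real n * f1"
  proof -
    have "(\<Sum>x\<in>G. F x) = real (\<Sum>x\<in>G. card {j\<in>S. x j = j})" unfolding F_def by simp
    also have "\<dots> = real (card S * fact (card S - 1))" using sumB[OF S] unfolding G_def by simp
    finally show ?thesis unfolding f1_def n_def by simp
  qed
  have sb: "(\<Sum>x\<in>G. b x) = fact n - f1"
  proof -
    have "(\<Sum>x\<in>G. b x) = (\<Sum>x\<in>G. 1 - (if x i = i then 1 else 0))" unfolding b_def by (intro sum.cong) auto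
    also have "\<dots> = real (card G) - real (card {x\<in>G. x i = i})" using finG by (simp add: sum_subtractf sum.inter_filter[symmetric])
    also have "card G = fact n" unfolding G_def n_def using S by (simp add: card_permutations)
    also have "card {x\<in>G. x i = i} = fact (n - 1)" using count1[OF S iS iS] unfolding G_def n_def by simp
    finally show ?thesis unfolding f1_def by simp
  qed
  have "(real n - 1) * real (card {(x,y). x \<in> G \<and> y \<in> G \<and> x (y i) = y (x i)}) = (fact n)^2"
    unfolding P1 sa sb sF fN f12 by (simp add: algebra_simps power2_eq_square)
  then show ?thesis unfolding G_def n_def .
qed


definition cm :: "('a \<Rightarrow> 'a) \<Rightarrow> ('a \<Rightarrow> 'a) \<Rightarrow> 'a \<Rightarrow> 'a" where
  "cm x y = inv' x \<circ> inv' y \<circ> x \<circ> y"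

lemma cm_eq:
  assumes "x permutes S" "y permutes S"
  shows "cm x y i = j \<longleftrightarrow> x (y i) = y (x j)"
proof -
  have "cm x y i = j \<longleftrightarrow> inv' x (inv' y (x (y i))) = j" by (simp add: cm_def)
  also have "\<dots> \<longleftrightarrow> inv' y (x (y i)) = x j" using permutes_inv_eq[OF assms(1), of "inv' y (x (y i))" j] by auto
  also have "\<dots> \<longleftrightarrow> x (y i) = y (x j)" using permutes_inv_eq[OF assms(2), of "x (y i)" "x j"] by auto
  finally show ?thesis .
qed

lemma cm_in:
  assumes "x permutes S" "y permutes S" "i \<in> S"
  shows "cm x y i \<in> S"
  using assms by (simp add: cm_def permutes_in_image permutes_inv)

lemma C_sum:
  assumes S: "finite S" and that: "i \<in> S"
  shows "(\<Sum>j\<in>S. card {(x,y). x \<in> {p. p permutes S} \<and> y \<in> {p. p permutes S} \<and> cm x y i = j}) = (fact (card S))^2"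
proof -
  define G where "G = {p. p permutes S}"
  have finG: "finite G" unfolding G_def using S by (rule finite_permutations)
  have "card {z\<in>G \<times> G. (\<lambda>(x,y). cm x y i) z \<in> S} = (\<Sum>j\<in>S. card {z\<in>G \<times> G. (\<lambda>(x,y). cm x y i) z = j})"
    using finG S by (intro card_fiber_sum) auto
  moreover have "{z\<in>G \<times> G. (\<lambda>(x,y). cm x y i) z \<in> S} = G \<times> G"
  proof (intro subset_antisym subsetI)
    fix z assume "z \<in> G \<times> G"
    then obtain x y where "z = (x,y)" "x permutes S" "y permutes S" unfolding G_def by auto
    then show "z \<in> {z\<in>G \<times> G. (\<lambda>(x,y). cm x y i) z \<in> S}" using cm_in[OF _ _ that] \<open>z \<in> G \<times> G\<close> by simp
  qed simp
  moreover have "card G = fact (card S)" unfolding G_def using S by (simp add: card_permutations)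
  moreover have "{z\<in>G \<times> G. (\<lambda>(x,y). cm x y i) z = j} = {(x,y). x \<in> G \<and> y \<in> G \<and> cm x y i = j}" for j
    by auto
  ultimately show ?thesis unfolding G_def by (simp add: power2_eq_square card_cartesian_product)
qed

lemma C_sym:
  assumes S: "finite S" and iS: "i \<in> S" and jS: "j \<in> S" and kS: "k \<in> S" and ji: "j \<noteq> i" and ki: "k \<noteq> i"
  shows "card {(x,y). x \<in> {p. p permutes S} \<and> y \<in> {p. p permutes S} \<and> cm x y i = j}
       \<le> card {(x,y). x \<in> {p. p permutes S} \<and> y \<in> {p. p permutes S} \<and> cm x y i = k}"
proof -
  define G where "G = {p. p permutes S}"
  have finG: "finite G" unfolding G_def using S by (rule finite_permutations)
  define t where "t = transpose j k"
  have tt: "t (t a) = a" for a unfolding t_def by simp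
  have ti: "t i = i" unfolding t_def using ji ki by simp
  have tS: "t permutes S" unfolding t_def using jS kS by (rule permutes_swap_id)
  define h where "h = (\<lambda>(x,y). (t \<circ> x \<circ> t, t \<circ> (y::'a\<Rightarrow>'a) \<circ> t))"
  have C: "{(x,y). x \<in> G \<and> y \<in> G \<and> cm x y i = l} = {(x,y). x \<in> G \<and> y \<in> G \<and> x (y i) = y (x l)}" for l
  proof (intro Collect_cong prod.case_cong refl)
    fix x y show "(x \<in> G \<and> y \<in> G \<and> cm x y i = l) = (x \<in> G \<and> y \<in> G \<and> x (y i) = y (x l))"
      unfolding G_def using cm_eq[of x S y i l] by auto
  qed
  have "inj_on h {(x,y). x \<in> G \<and> y \<in> G \<and> x (y i) = y (x j)}"
  proof (rule inj_onI)
    fix z w assume "z \<in> {(x,y). x \<in> G \<and> y \<in> G \<and> x (y i) = y (x j)}" "w \<in> {(x,y). x \<in> G \<and> y \<in> G \<and> x (y i) = y (x j)}" "h z = h w"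
    then obtain x y x' y' where z: "z = (x,y)" and w: "w = (x',y')" and e: "t \<circ> x \<circ> t = t \<circ> x' \<circ> t" "t \<circ> y \<circ> t = t \<circ> y' \<circ> t"
      unfolding h_def by auto
    have "x a = x' a" for a
    proof -
      have "t (x a) = t (x' a)" using fun_cong[OF e(1), of "t a"] tt by simp
      then show ?thesis by (metis tt)
    qed
    moreover have "y a = y' a" for a
    proof -
      have "t (y a) = t (y' a)" using fun_cong[OF e(2), of "t a"] tt by simp
      then show ?thesis by (metis tt)
    qed
    ultimately show "z = w" unfolding z w by (simp add: fun_eq_iff)
  qed
  moreover have "h ` {(x,y). x \<in> G \<and> y \<in> G \<and> x (y i) = y (x j)} \<subseteq> {(x,y). x \<in> G \<and> y \<in> G \<and> x (y i) = y (x k)}"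
  proof
    fix z assume "z \<in> h ` {(x,y). x \<in> G \<and> y \<in> G \<and> x (y i) = y (x j)}"
    then obtain x y where xy: "x \<in> G" "y \<in> G" "x (y i) = y (x j)" and z: "z = h (x,y)" by auto
    have "t \<circ> x \<circ> t \<in> G" "t \<circ> y \<circ> t \<in> G" using xy tS unfolding G_def by (simp_all add: permutes_compose)
    moreover have "t k = j" unfolding t_def by simp
    ultimately show "z \<in> {(x,y). x \<in> G \<and> y \<in> G \<and> x (y i) = y (x k)}" 
    proof -
      have "(t \<circ> x \<circ> t) ((t \<circ> y \<circ> t) i) = t (x (y i))" using ti tt by simp
      also have "\<dots> = t (y (x j))" using xy(3) by simp
      also have "\<dots> = (t \<circ> y \<circ> t) ((t \<circ> x \<circ> t) k)" using \<open>t k = j\<close> tt by simp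
      finally show ?thesis unfolding z h_def using \<open>t \<circ> x \<circ> t \<in> G\<close> \<open>t \<circ> y \<circ> t \<in> G\<close> by simp
    qed
  qed
  moreover have "finite {(x,y). x \<in> G \<and> y \<in> G \<and> x (y i) = y (x k)}"
    by (rule finite_subset[of _ "G \<times> G"]) (use finG in auto)
  ultimately have "card {(x,y). x \<in> G \<and> y \<in> G \<and> x (y i) = y (x j)} \<le> card {(x,y). x \<in> G \<and> y \<in> G \<and> x (y i) = y (x k)}"
    by (rule card_inj_on_le)
  then show ?thesis unfolding G_def[symmetric] C .
qed


lemma C_P:
  assumes S: "finite S" and iS: "i \<in> S" and n2: "card S \<ge> 2"
  shows "(real (card S) - 1) * real (card {(x,y). x \<in> {p. p permutes S} \<and> y \<in> {p. p permutes S} \<and> cm x y i = i}) = (fact (card S))^2"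
proof -
  have "{(x,y). x \<in> {p. p permutes S} \<and> y \<in> {p. p permutes S} \<and> cm x y i = i} = {(x,y). x \<in> {p. p permutes S} \<and> y \<in> {p. p permutes S} \<and> x (y i) = y (x i)}"
  proof (intro Collect_cong prod.case_cong refl)
    fix x y show "(x \<in> {p. p permutes S} \<and> y \<in> {p. p permutes S} \<and> cm x y i = i) = (x \<in> {p. p permutes S} \<and> y \<in> {p. p permutes S} \<and> x (y i) = y (x i))"
      using cm_eq[of x S y i i] by auto
  qed
  then show ?thesis using P_count[OF S iS n2] by simp
qed

lemma C_Q:
  assumes S: "finite S" and iS: "i \<in> S" and jS: "j \<in> S" and ji: "j \<noteq> i" and n2: "card S \<ge> 2"
  shows "(real (card S) - 1)^2 * real (card {(x,y). x \<in> {p. p permutes S} \<and> y \<in> {p. p permutes S} \<and> cm x y i = j})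
       = (real (card S) - 2) * (fact (card S))^2"
proof -
  define c where "c l = card {(x,y). x \<in> {p. p permutes S} \<and> y \<in> {p. p permutes S} \<and> cm x y i = l}" for l
  define N :: real where "N = fact (card S)"
  have ceq: "c l = c j" if "l \<in> S - {i}" for l
    using C_sym[OF S iS jS, of l] C_sym[OF S iS _ jS, of l] that ji unfolding c_def by (intro antisym) auto
  have "(\<Sum>l\<in>S. c l) = (fact (card S))^2" unfolding c_def by (rule C_sum[OF S iS])
  also have "(\<Sum>l\<in>S. c l) = c i + (\<Sum>l\<in>S - {i}. c l)" using S iS by (simp add: sum.remove)
  also have "(\<Sum>l\<in>S - {i}. c l) = (\<Sum>l\<in>S - {i}. c j)" using ceq by (intro sum.cong) auto
  also have "\<dots> = (card S - 1) * c j" using S iS by simp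
  finally have e0: "c i + (card S - 1) * c j = (fact (card S))^2" by simp
  have e: "real (c i) + (real (card S) - 1) * real (c j) = N^2"
  proof -
    have "real (c i + (card S - 1) * c j) = real ((fact (card S))^2)" using e0 by (rule arg_cong)
    then show ?thesis unfolding N_def using n2 by (simp add: of_nat_diff)
  qed
  have p: "(real (card S) - 1) * real (c i) = N^2" using C_P[OF S iS n2] unfolding c_def N_def .
  have "(real (card S) - 1)^2 * real (c j) = (real (card S) - 1) * (N^2 - real (c i))"
  proof -
    have "N^2 - real (c i) = (real (card S) - 1) * real (c j)" using e by linarith
    then show ?thesis by (simp add: power2_eq_square)
  qed
  also have "\<dots> = (real (card S) - 2) * N^2" using p by (simp add: algebra_simps)
  finally show ?thesis unfolding c_def N_def .
qed


theorem corollary4: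
  fixes n :: nat
  assumes "n \<ge> 2"
  shows "(\<forall>g \<in> carrier (sym_group n).
            comm_prob (sym_group n) g
              \<le> (1 / real n) * (1 + chi_std n g / (real n - 1) ^ 2))
         \<and> comm_prob (sym_group n) \<one>\<^bsub>sym_group n\<^esub> \<le> 1 / (real n - 1)"
proof -
  define S where "S = {1..n}"
  have finS: "finite S" unfolding S_def by simp
  have cardS: "card S = n" unfolding S_def by simp
  have n2: "card S \<ge> 2" using assms cardS by simp
  have carr: "carrier (sym_group n) = {p. p permutes S}" by (simp add: sym_group_def S_def)
  have comm: "commutator (sym_group n) x y = cm x y" if "x \<in> carrier (sym_group n)" "y \<in> carrier (sym_group n)" for x y
    using that by (simp add: commutator_def sym_group_mult cm_def)
  define N :: real where "N = fact n"
  have Npos: "N > 0" unfolding N_def by simp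
  have d0: "real n - 1 > 0" using assms by simp
  define P0 where "P0 = N^2 / (real n - 1)"
  define Q0 where "Q0 = (real n - 2) * N^2 / (real n - 1)^2"
  have main: "comm_prob (sym_group n) g \<le> (1 / real n) * (1 + chi_std n g / (real n - 1) ^ 2)"
    if g: "g \<in> carrier (sym_group n)" for g
  proof -
    define Sg where "Sg = {(x, y). x \<in> carrier (sym_group n) \<and> y \<in> carrier (sym_group n) \<and> commutator (sym_group n) x y = g}"
    define C where "C i j = card {(x,y). x \<in> {p. p permutes S} \<and> y \<in> {p. p permutes S} \<and> cm x y i = j}" for i j
    have gS: "g permutes S" using g carr by simp
    have finG: "finite {p. p permutes S}" using finS by (rule finite_permutations)
    have sub: "card Sg \<le> C i (g i)" if "i \<in> S" for i
      unfolding C_def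
    proof (rule card_mono)
      show "finite {(x,y). x \<in> {p. p permutes S} \<and> y \<in> {p. p permutes S} \<and> cm x y i = g i}"
        by (rule finite_subset[of _ "{p. p permutes S} \<times> {p. p permutes S}"]) (use finG in auto)
      show "Sg \<subseteq> {(x,y). x \<in> {p. p permutes S} \<and> y \<in> {p. p permutes S} \<and> cm x y i = g i}"
        unfolding Sg_def using comm carr by auto
    qed
    have "(\<Sum>i\<in>S. real (card Sg)) \<le> (\<Sum>i\<in>S. real (C i (g i)))"
      using sub by (intro sum_mono) simp
    then have le1: "real n * real (card Sg) \<le> (\<Sum>i\<in>S. real (C i (g i)))" using cardS by simp
    have Cval: "real (C i (g i)) = Q0 + (if g i = i then P0 - Q0 else 0)" if iS: "i \<in> S" for i
    proof (cases "g i = i")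
      case True
      have "(real n - 1) * real (C i i) = N^2" using C_P[OF finS iS n2] unfolding C_def N_def cardS .
      then have "real (C i i) = P0" unfolding P0_def using d0 by (simp add: field_simps)
      then show ?thesis using True by simp
    next
      case False
      have giS: "g i \<in> S" using gS iS by (simp add: permutes_in_image)
      have "(real n - 1)^2 * real (C i (g i)) = (real n - 2) * N^2" using C_Q[OF finS iS giS False n2] unfolding C_def N_def cardS .
      then have "real (C i (g i)) = Q0" unfolding Q0_def using d0 by (simp add: field_simps)
      then show ?thesis using False by simp
    qed
    define f where "f = card {i\<in>S. g i = i}"
    have "(\<Sum>i\<in>S. real (C i (g i))) = (\<Sum>i\<in>S. Q0 + (if g i = i then P0 - Q0 else 0))"
      using Cval by (intro sum.cong) auto
    also have "\<dots> = real n * Q0 + (\<Sum>i\<in>S. if g i = i then P0 - Q0 else 0)"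
      using cardS by (simp add: sum.distrib)
    also have "(\<Sum>i\<in>S. if g i = i then P0 - Q0 else 0) = real f * (P0 - Q0)"
      unfolding f_def using finS by (simp add: sum.inter_filter[symmetric])
    finally have le2: "real n * real (card Sg) \<le> real n * Q0 + real f * (P0 - Q0)" using le1 by simp
    have iden: "real n * Q0 + real f * (P0 - Q0) = N^2 * (1 + (real f - 1) / (real n - 1)^2)"
    proof -
      define d where "d = real n - 1"
      have dn: "real n = d + 1" "real n - 2 = d - 1" unfolding d_def by simp_all
      have dp: "d \<noteq> 0" using d0 unfolding d_def by simp
      show ?thesis unfolding P0_def Q0_def d_def[symmetric] dn using dp
        by (simp add: field_simps power2_eq_square)
    qed
    have chi: "chi_std n g = real f - 1" unfolding chi_std_def perm_char_def f_def S_def by simp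
    have cp: "comm_prob (sym_group n) g = real (card Sg) / N^2"
      unfolding comm_prob_def Sg_def N_def by (simp add: sym_group_card_carrier)
    define B where "B = 1 + (real f - 1) / (real n - 1)^2"
    have le3: "real n * real (card Sg) \<le> N^2 * B" using le2 iden unfolding B_def by simp
    have np: "real n > 0" using d0 by simp
    have "real (card Sg) / N^2 = (real n * real (card Sg)) / (real n * N^2)" using np by simp
    also have "\<dots> \<le> (N^2 * B) / (real n * N^2)" using le3 np Npos by (intro divide_right_mono) auto
    also have "\<dots> = (1 / real n) * B" using Npos by simp
    finally show ?thesis unfolding cp chi B_def .
  qed
  have id_in: "\<one>\<^bsub>sym_group n\<^esub> \<in> carrier (sym_group n)" by (simp add: sym_group_one carr permutes_id)
  have chi1: "chi_std n \<one>\<^bsub>sym_group n\<^esub> = real n - 1"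
  proof -
    have "{i \<in> {1..n}. id i = i} = {1..n}" by auto
    then show ?thesis unfolding chi_std_def perm_char_def sym_group_one by simp
  qed
  have "(1 / real n) * (1 + (real n - 1) / (real n - 1) ^ 2) = 1 / (real n - 1)"
  proof -
    define d where "d = real n - 1"
    have dn: "real n = d + 1" unfolding d_def by simp
    have dp: "d \<noteq> 0" "d + 1 \<noteq> 0" using d0 unfolding d_def by simp_all
    show ?thesis unfolding d_def[symmetric] dn using dp by (simp add: field_simps power2_eq_square)
  qed
  then have "comm_prob (sym_group n) \<one>\<^bsub>sym_group n\<^esub> \<le> 1 / (real n - 1)"
    using main[OF id_in] unfolding chi1 by simp
  with main show ?thesis by blast
qed

end
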